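(* Let $n\ge 1$, $N=\{1,\dots,n\}$, $A=(a_{ij})\in[0,1]^{n\times n}$ and $\lambda\in[0,+\infty)$. Let $x=(x_1,\dots,x_n)\in[0,1]^n$ with $x\neq\theta$. Then $x\in V(A,\lambda)$ if and only if there exists $k=(k_1,\dots,k_n)\in K$ such that $$q_{(k_j-1)j}\le x_j\le q_{k_jj}\ \text{ for all } j\in N,\qquad \sum_{j\in N}\big[\delta_{ij}\, x_j+(1-\delta_{ij})\, a_{ij}\big]=\lambda x_i\ \text{ for all } i\in N,$$ where $\delta_{ij}$ (depending on $k$) is as defined in the context.
   Context: $\theta=(0,\dots,0)\in[0,1]^n$. For $x\in[0,1]^n$ and $\lambda\in[0,+\infty)$, the equation $A\odot x^T=\lambda x^T$ means $\sum_{j\in N}\min\{a_{ij},x_j\}=\lambda x_i$ for every $i\in N$ (ordinary addition and multiplication). $V(A,\lambda)=\{x\in[0,1]^n : A\odot x^T=\lambda x^T,\ x\neq\theta\}$ is the set of eigenvectors of $A$ associated with $\lambda$. For each $j\in N$, let $t_j$ be the number of distinct values in $\{a_{ij}: i\in N\}\cap(0,1)$, list these values as $q_{1j}<q_{2j}<\dots<q_{t_jj}$, and put $q_{0j}=0$, $q_{(t_j+1)j}=1$, $Q_j=\{q_{0j},\dots,q_{(t_j+1)j}\}$. Let $K_j=\{k: q_{kj}\in Q_j,\ q_{kj}>0\}=\{1,\dots,t_j+1\}$ and $K=K_1\times\dots\times K_n$. For $k=(k_1,\dots,k_n)\in K$ and $i,j\in N$, set $\delta_{ij}=1$ if $q_{k_jj}\le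 a_{ij}$ and $\delta_{ij}=0$ if $a_{ij}\le q_{(k_j-1)j}$ (exactly one of these holds since $a_{ij}\in Q_j$). *)

theory Defs
  imports "HOL-Analysis.Analysis"
begin

text \<open>Index set N = {1..n} is rendered as the finite type 'n (N = UNIV);
  matrices are real^'n^'n with entry a_ij = A$i$j.\<close>

definition colvals :: "real^'n^'n \<Rightarrow> 'n \<Rightarrow> real set" where
  "colvals A j = {A$i$j | i. True} \<inter> {0<..<1}"

definition tnum :: "real^'n^'n \<Rightarrow> 'n \<Rightarrow> nat" where
  "tnum A j = card (colvals A j)"

definition Qset :: "real^'n^'n \<Rightarrow> 'n \<Rightarrow> real set" where
  "Qset A j = {0, 1} \<union> colvals A j"

text \<open>q A k j = q_{kj}: the k-th element (0-based) of Q_j in increasing order.\<close>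
definition q :: "real^'n^'n \<Rightarrow> nat \<Rightarrow> 'n \<Rightarrow> real" where
  "q A k j = sorted_list_of_set (Qset A j) ! k"

definition Kset :: "real^'n^'n \<Rightarrow> ('n \<Rightarrow> nat) set" where
  "Kset A = {k. \<forall>j. k j \<in> {1..tnum A j + 1}}"

definition delta :: "real^'n^'n \<Rightarrow> ('n \<Rightarrow> nat) \<Rightarrow> 'n \<Rightarrow> 'n \<Rightarrow> real" where
  "delta A k i j = (if q A (k j) j \<le> A$i$j then 1 else 0)"

definition eigvecs :: "real^'n^'n \<Rightarrow> real \<Rightarrow> (real^'n) set" where
  "eigvecs A lam = {x. (\<forall>j. 0 \<le> x$j \<and> x$j \<le> 1)
      \<and> (\<forall>i. (\<Sum>j\<in>UNIV. min (A$i$j) (x$j)) = lam * x$i) \<and> x \<noteq> 0}"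

end

theory Submission
  imports Defs
begin

lemma sl_facts:
  fixes S :: "real set"
  assumes fin: "finite S" and sub: "S \<subseteq> {0..1}" and z: "0 \<in> S" and o: "1 \<in> S"
  defines "s \<equiv> sorted_list_of_set S"
  shows "length s \<ge> 2" "s!0 = 0" "s!(length s - 1) = 1"
    "\<And>a k. a \<in> S \<Longrightarrow> 1 \<le> k \<Longrightarrow> k < length s \<Longrightarrow> a < s!k \<Longrightarrow> a \<le> s!(k-1)"
proof -
  have srt: "sorted s" and st: "set s = S" and ls: "length s = card S"
    using fin by (auto simp: s_def)
  have "card {0::real,1} \<le> card S" using fin z o by (intro card_mono) auto
  then show l2: "length s \<ge> 2" using ls by simp
  have "s!0 \<in> S" proof -
    have "s \<noteq> []" using l2 by auto
    then show ?thesis using st nth_mem[of 0 s] by simp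
  qed
  moreover have "s!0 \<le> 0"
  proof -
    obtain m where "m < length s" "s!m = 0" using z st by (metis in_set_conv_nth)
    then show ?thesis using srt sorted_nth_mono[of s 0 m] by simp
  qed
  ultimately show "s!0 = 0" using sub by force
  have "s!(length s - 1) \<in> S" using l2 st nth_mem[of "length s - 1" s] by simp
  moreover have "s!(length s - 1) \<ge> 1"
  proof -
    obtain m where "m < length s" "s!m = 1" using o st by (metis in_set_conv_nth)
    then show ?thesis using srt sorted_nth_mono[of s m "length s - 1"] by simp
  qed
  ultimately show "s!(length s - 1) = 1" using sub by force
  fix a k assume a: "a \<in> S" "1 \<le> k" "k < length s" "a < s!k"
  obtain m where m: "m < length s" "s!m = a" using a st by (metis in_set_conv_nth)
  have "m < k"
  proof (rule ccontr)
    assume "\<not> m < k" then have "s!k \<le> s!m" using srt m sorted_nth_mono[of s k m] by simp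
    then show False using a m by simp
  qed
  then show "a \<le> s!(k-1)" using srt m a sorted_nth_mono[of s m "k-1"] by simp
qed

lemma sl_exists:
  fixes s :: "real list"
  assumes "length s \<ge> 2" "s!0 = 0" "s!(length s - 1) = 1" "0 \<le> y" "y \<le> 1"
  shows "\<exists>k. 1 \<le> k \<and> k < length s \<and> s!(k-1) \<le> y \<and> y \<le> s!k"
proof -
  define P where "P k \<longleftrightarrow> 1 \<le> k \<and> y \<le> s!k" for k
  have "P (length s - 1)" using assms by (auto simp: P_def)
  then have PL: "P (LEAST k. P k)" and le: "(LEAST k. P k) \<le> length s - 1"
    by (auto intro: LeastI Least_le)
  define k where "k = (LEAST k. P k)"
  have "s!(k-1) \<le> y"
  proof (cases "k = 1")
    case True then show ?thesis using assms by simp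
  next
    case False
    then have "\<not> P (k-1)" using PL k_def not_less_Least[of "k-1" P] by (auto simp: P_def)
    moreover have "1 \<le> k - 1" using PL False k_def by (auto simp: P_def)
    ultimately show ?thesis by (auto simp: P_def)
  qed
  then show ?thesis using PL le assms(1) k_def by (intro exI[of _ k]) (auto simp: P_def)
qed

lemma Q_props:
  fixes A :: "real^'n^'n"
  assumes "\<forall>i j. 0 \<le> A$i$j \<and> A$i$j \<le> 1"
  shows "finite (Qset A j)" "Qset A j \<subseteq> {0..1}" "0 \<in> Qset A j" "1 \<in> Qset A j"
    "A$i$j \<in> Qset A j" "length (sorted_list_of_set (Qset A j)) = tnum A j + 2"
proof -
  have fc: "finite (colvals A j)"
  proof -
    have "{A$i$j | i. True} = range (\<lambda>i. A$i$j)" by auto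
    then show ?thesis unfolding colvals_def by simp
  qed
  then show "finite (Qset A j)" by (simp add: Qset_def)
  show "Qset A j \<subseteq> {0..1}" by (auto simp: Qset_def colvals_def)
  show "0 \<in> Qset A j" "1 \<in> Qset A j" by (auto simp: Qset_def)
  show "A$i$j \<in> Qset A j"
  proof -
    have "0 \<le> A$i$j" "A$i$j \<le> 1" using assms by auto
    then have "A$i$j = 0 \<or> A$i$j = 1 \<or> A$i$j \<in> colvals A j" by (auto simp: colvals_def)
    then show ?thesis by (auto simp: Qset_def)
  qed
  have "Qset A j = insert 0 (insert 1 (colvals A j))" by (auto simp: Qset_def)
  moreover have "0 \<notin> colvals A j" "1 \<notin> colvals A j" by (auto simp: colvals_def)
  ultimately have "card (Qset A j) = tnum A j + 2" using fc by (simp add: tnum_def)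
  then show "length (sorted_list_of_set (Qset A j)) = tnum A j + 2" by simp
qed

theorem theorem3p1:
  fixes A :: "real^'n^'n" and lam :: real and x :: "real^'n"
  assumes "\<forall>i j. 0 \<le> A$i$j \<and> A$i$j \<le> 1"
    and "0 \<le> lam"
    and "\<forall>j. 0 \<le> x$j \<and> x$j \<le> 1"
    and "x \<noteq> 0"
  shows "x \<in> eigvecs A lam \<longleftrightarrow>
    (\<exists>k\<in>Kset A. (\<forall>j. q A (k j - 1) j \<le> x$j \<and> x$j \<le> q A (k j) j)
       \<and> (\<forall>i. (\<Sum>j\<in>UNIV. delta A k i j * x$j + (1 - delta A k i j) * A$i$j) = lam * x$i))"
proof -
  note QP = Q_props[OF assms(1)]
  have key: "min (A$i$j) (x$j) = delta A k i j * x$j + (1 - delta A k i j) * A$i$j"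
    if k: "k \<in> Kset A" and b: "q A (k j - 1) j \<le> x$j \<and> x$j \<le> q A (k j) j" for k i j
  proof (cases "q A (k j) j \<le> A$i$j")
    case True then show ?thesis using b by (simp add: delta_def)
  next
    case False
    have "k j \<in> {1..tnum A j + 1}" using k by (simp add: Kset_def)
    then have "A$i$j \<le> q A (k j - 1) j"
      using sl_facts(4)[OF QP(1-4) QP(5), of "k j"] QP(6) False by (simp add: q_def)
    then show ?thesis using b False by (simp add: delta_def)
  qed
  have ex: "\<exists>k\<in>Kset A. \<forall>j. q A (k j - 1) j \<le> x$j \<and> x$j \<le> q A (k j) j"
  proof -
    have "\<forall>j. \<exists>kj. 1 \<le> kj \<and> kj < tnum A j + 2 \<and> q A (kj - 1) j \<le> x$j \<and> x$j \<le> q A kj j"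
    proof
      fix j
      show "\<exists>kj. 1 \<le> kj \<and> kj < tnum A j + 2 \<and> q A (kj - 1) j \<le> x$j \<and> x$j \<le> q A kj j"
        using sl_exists[OF sl_facts(1-3)[OF QP(1-4)[of j]], of "x$j"] assms(3) QP(6)[of j]
        by (simp add: q_def)
    qed
    then obtain k where kk: "\<forall>j. 1 \<le> k j \<and> k j < tnum A j + 2 \<and> q A (k j - 1) j \<le> x$j \<and> x$j \<le> q A (k j) j"
      by metis
    have "k j \<in> {1..tnum A j + 1}" for j using kk[rule_format, of j] by auto
    then show ?thesis using kk by (intro bexI[of _ k]) (auto simp: Kset_def)
  qed
  show ?thesis
  proof
    assume "x \<in> eigvecs A lam"
    then have e: "\<forall>i. (\<Sum>j\<in>UNIV. min (A$i$j) (x$j)) = lam * x$i" by (simp add: eigvecs_def)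
    from ex obtain k where k: "k \<in> Kset A" "\<forall>j. q A (k j - 1) j \<le> x$j \<and> x$j \<le> q A (k j) j" by blast
    show "\<exists>k\<in>Kset A. (\<forall>j. q A (k j - 1) j \<le> x$j \<and> x$j \<le> q A (k j) j)
       \<and> (\<forall>i. (\<Sum>j\<in>UNIV. delta A k i j * x$j + (1 - delta A k i j) * A$i$j) = lam * x$i)"
    proof (intro bexI[of _ k] conjI allI)
      fix i
      have "(\<Sum>j\<in>UNIV. delta A k i j * x$j + (1 - delta A k i j) * A$i$j) = (\<Sum>j\<in>UNIV. min (A$i$j) (x$j))"
        using k key by (intro sum.cong) auto
      then show "(\<Sum>j\<in>UNIV. delta A k i j * x$j + (1 - delta A k i j) * A$i$j) = lam * x$i" using e by simp
    qed (use k in auto)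
  next
    assume "\<exists>k\<in>Kset A. (\<forall>j. q A (k j - 1) j \<le> x$j \<and> x$j \<le> q A (k j) j)
       \<and> (\<forall>i. (\<Sum>j\<in>UNIV. delta A k i j * x$j + (1 - delta A k i j) * A$i$j) = lam * x$i)"
    then obtain k where k: "k \<in> Kset A" "\<forall>j. q A (k j - 1) j \<le> x$j \<and> x$j \<le> q A (k j) j"
      and e: "\<forall>i. (\<Sum>j\<in>UNIV. delta A k i j * x$j + (1 - delta A k i j) * A$i$j) = lam * x$i" by blast
    have "\<forall>i. (\<Sum>j\<in>UNIV. min (A$i$j) (x$j)) = lam * x$i"
    proof
      fix i
      have "(\<Sum>j\<in>UNIV. delta A k i j * x$j + (1 - delta A k i j) * A$i$j) = (\<Sum>j\<in>UNIV. min (A$i$j) (x$j))"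
        using k key by (intro sum.cong) auto
      then show "(\<Sum>j\<in>UNIV. min (A$i$j) (x$j)) = lam * x$i" using e by simp
    qed
    then show "x \<in> eigvecs A lam" using assms by (simp add: eigvecs_def)
  qed
qed

end
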